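(* For every tetrahedral erasure channel $W$, $A(W^{s})+A(W^{p})\le A(W)$.
   Context: $\mathrm{TEC}(p,q,r,s,t)$ denotes a tetrahedral erasure channel with parameters $p,q,r,s,t\ge0$ summing to $1$; its moment of inertia is $A=(q-r)^2+(r-s)^2+(s-q)^2$. For $W=\mathrm{TEC}(p,q,r,s,t)$, the serial child is $W^{s}=\mathrm{TEC}(p^2,\ ps+sq+qp,\ pq+qr+rp,\ pr+rs+sp,\ 1-\text{(sum of the other four)})$ and the parallel child is $W^{p}=\mathrm{TEC}(1-\text{(sum of the other four)},\ ts+sq+qt,\ tq+qr+rt,\ tr+rs+st,\ t^2)$. *)

theory Defs
  imports Main "HOL.Real"
begin

record tec =
  tp :: real
  tq :: real
  tr :: real
  ts :: real
  tt :: real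

definition is_TEC :: "tec \<Rightarrow> bool" where
  "is_TEC W \<longleftrightarrow> tp W \<ge> 0 \<and> tq W \<ge> 0 \<and> tr W \<ge> 0 \<and> ts W \<ge> 0 \<and> tt W \<ge> 0
     \<and> tp W + tq W + tr W + ts W + tt W = 1"

definition TEC :: "real \<Rightarrow> real \<Rightarrow> real \<Rightarrow> real \<Rightarrow> real \<Rightarrow> tec" where
  "TEC p q r s t = \<lparr>tp = p, tq = q, tr = r, ts = s, tt = t\<rparr>"

definition inertia :: "tec \<Rightarrow> real" where
  "inertia W = (tq W - tr W)^2 + (tr W - ts W)^2 + (ts W - tq W)^2"

definition serial_child :: "tec \<Rightarrow> tec" where
  "serial_child W = (let p = tp W; q = tq W; r = tr W; s = ts W;
      p' = p^2; q' = p*s + s*q + q*p; r' = p*q + q*r + r*p; s' = p*r + r*s + s*p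
    in TEC p' q' r' s' (1 - (p' + q' + r' + s')))"

definition parallel_child :: "tec \<Rightarrow> tec" where
  "parallel_child W = (let q = tq W; r = tr W; s = ts W; t = tt W;
      q' = t*s + s*q + q*t; r' = t*q + q*r + r*t; s' = t*r + r*s + s*t; t' = t^2
    in TEC (1 - (q' + r' + s' + t')) q' r' s' t')"

end

theory Submission
  imports Defs
begin

lemma two_var:
  fixes q m :: real assumes "q \<ge> 0" "m \<ge> 0"
  shows "16*q^2*m^2 \<le> (q+m)^2*(5*m^2+(2*q-m)^2)"
proof -
  have e1: "(q+m)^2 = (q-m)^2 + 4*q*m" by algebra
  have h1: "(q+m)^2 \<ge> 4*q*m" unfolding e1 by simp
  have e2: "5*m^2+(2*q-m)^2 = 4*(q-m)^2 + 2*m^2 + 4*q*m" by algebra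
  have h2: "5*m^2+(2*q-m)^2 \<ge> 4*q*m" unfolding e2 by simp
  have "16*q^2*m^2 = (4*q*m)*(4*q*m)" by algebra
  also have "\<dots> \<le> (q+m)^2*(5*m^2+(2*q-m)^2)"
    using h1 h2 assms by (intro mult_mono) auto
  finally show ?thesis .
qed

lemma per_term:
  fixes q r s T :: real assumes "q \<ge> 0" "r \<ge> 0" "s \<ge> 0" "T = q+r+s"
  shows "8*(q^2*(s-r)^2) \<le> T^2*(2*(s-r)^2 + (q-s)^2 + (r-q)^2)"
proof -
  define m where "m = r+s"
  define d where "d = s-r"
  have m0: "m \<ge> 0" using assms m_def by simp
  have e0: "m^2 - d^2 = 4*r*s" unfolding m_def d_def by algebra
  have "4*r*s \<ge> 0" using assms by simp
  hence dm: "d^2 \<le> m^2" using e0 by linarith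
  have eq: "2*(T^2*(2*(s-r)^2 + (q-s)^2 + (r-q)^2)) = (q+m)^2*(5*d^2+(2*q-m)^2)"
    unfolding m_def d_def assms(4) by algebra
  have e3: "(q+m)^2*(5*d^2+(2*q-m)^2) = 5*(q+m)^2*d^2 + (q+m)^2*(2*q-m)^2" by algebra
  have "16*q^2*d^2 \<le> (q+m)^2*(5*d^2+(2*q-m)^2)"
  proof (cases "16*q^2 \<le> 5*(q+m)^2")
    case True
    have "16*q^2*d^2 \<le> 5*(q+m)^2*d^2" using True by (simp add: mult_right_mono)
    moreover have "(q+m)^2*(2*q-m)^2 \<ge> 0" by simp
    ultimately show ?thesis unfolding e3 by linarith
  next
    case False
    have "(16*q^2 - 5*(q+m)^2)*d^2 \<le> (16*q^2 - 5*(q+m)^2)*m^2"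
      using False dm by (intro mult_left_mono) auto
    moreover have "16*q^2*m^2 \<le> (q+m)^2*(5*m^2+(2*q-m)^2)" using two_var assms(1) m0 by blast
    moreover have "(16*q^2 - 5*(q+m)^2)*d^2 = 16*q^2*d^2 - 5*(q+m)^2*d^2" by algebra
    moreover have "(16*q^2 - 5*(q+m)^2)*m^2 = 16*q^2*m^2 - 5*(q+m)^2*m^2" by algebra
    moreover have "(q+m)^2*(5*m^2+(2*q-m)^2) = 5*(q+m)^2*m^2 + (q+m)^2*(2*q-m)^2" by algebra
    ultimately show ?thesis unfolding e3 by linarith
  qed
  moreover have "16*q^2*d^2 = 2*(8*(q^2*(s-r)^2))" unfolding d_def by algebra
  ultimately show ?thesis using eq by linarith
qed

lemma lin3: fixes x1 x2 x3 y1 y2 y3 z :: real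
  assumes "8*x1 \<le> y1" "8*x2 \<le> y2" "8*x3 \<le> y3" "y1+y2+y3 = 4*z" shows "2*(x1+x2+x3) \<le> z"
  using assms by (smt (verit))

lemma G_nonneg:
  fixes q r s T :: real assumes "q \<ge> 0" "r \<ge> 0" "s \<ge> 0" "T = q+r+s"
  shows "2*(q^2*(s-r)^2 + r^2*(q-s)^2 + s^2*(r-q)^2) \<le> T^2*((s-r)^2+(q-s)^2+(r-q)^2)"
proof -
  have 1: "8*(q^2*(s-r)^2) \<le> T^2*(2*(s-r)^2 + (q-s)^2 + (r-q)^2)" using per_term assms by blast
  have 2: "8*(r^2*(q-s)^2) \<le> T^2*(2*(q-s)^2 + (r-q)^2 + (s-r)^2)" using per_term[of r s q T] assms by simp
  have 3: "8*(s^2*(r-q)^2) \<le> T^2*(2*(r-q)^2 + (s-r)^2 + (q-s)^2)" using per_term[of s q r T] assms by simp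
  have "T^2*(2*(s-r)^2 + (q-s)^2 + (r-q)^2) + T^2*(2*(q-s)^2 + (r-q)^2 + (s-r)^2) + T^2*(2*(r-q)^2 + (s-r)^2 + (q-s)^2)
    = 4*(T^2*((s-r)^2+(q-s)^2+(r-q)^2))" by algebra
  then show ?thesis using lin3[OF 1 2 3] by blast
qed

lemma coef_bound:
  fixes p t x m :: real assumes "p \<ge> 0" "t \<ge> 0" "x \<ge> 0" "m \<ge> 0" "p+t+x+m = 1"
  shows "(p+x)^2 + (t+x)^2 \<le> 1 - ((x+m)^2 - 2*x^2)"
proof -
  have e: "1 - ((x+m)^2 - 2*x^2) - ((p+x)^2 + (t+x)^2) = 2*p*t - 2*(m*(x+m-1))"
    using assms(5) by algebra
  have "p*t \<ge> 0" using assms by simp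
  moreover have "m*(x+m-1) \<le> 0" using assms by (intro mult_nonneg_nonpos) auto
  ultimately show ?thesis using e by linarith
qed
lemma lin_final: fixes S K1 K2 K3 A B C G1 G2 G3 P Q R T :: real
  assumes "S = K1 + K2 + K3" "K1 \<le> A" "K2 \<le> B" "K3 \<le> C"
    "A + B + C = P - T + 2*G1" "2*G1 \<le> T"
  shows "S \<le> P"
  using assms by (smt (verit))

theorem mainTheorem4:
  assumes "is_TEC W"
  shows "inertia (serial_child W) + inertia (parallel_child W) \<le> inertia W"
proof -
  obtain p q r s t where W: "tp W = p" "tq W = q" "tr W = r" "ts W = s" "tt W = t" by blast
  have nn: "p \<ge> 0" "q \<ge> 0" "r \<ge> 0" "s \<ge> 0" "t \<ge> 0" and sum: "p+q+r+s+t = 1"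
    using assms W unfolding is_TEC_def by auto
  define T where "T = q+r+s"
  have ser: "inertia (serial_child W) = (p+q)^2*(s-r)^2 + (p+r)^2*(q-s)^2 + (p+s)^2*(r-q)^2"
    unfolding serial_child_def inertia_def TEC_def Let_def W by simp algebra
  have par: "inertia (parallel_child W) = (t+q)^2*(s-r)^2 + (t+r)^2*(q-s)^2 + (t+s)^2*(r-q)^2"
    unfolding parallel_child_def inertia_def TEC_def Let_def W by simp algebra
  have orig: "inertia W = (s-r)^2 + (q-s)^2 + (r-q)^2"
    unfolding inertia_def W by algebra
  have k1: "(p+q)^2 + (t+q)^2 \<le> 1 - (T^2 - 2*q^2)"
    using coef_bound[of p t q "r+s"] nn sum unfolding T_def by (simp add: algebra_simps)
  have k2: "(p+r)^2 + (t+r)^2 \<le> 1 - (T^2 - 2*r^2)"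
    using coef_bound[of p t r "q+s"] nn sum unfolding T_def by (simp add: algebra_simps)
  have k3: "(p+s)^2 + (t+s)^2 \<le> 1 - (T^2 - 2*s^2)"
    using coef_bound[of p t s "q+r"] nn sum unfolding T_def by (simp add: algebra_simps)
  have G: "2*(q^2*(s-r)^2 + r^2*(q-s)^2 + s^2*(r-q)^2) \<le> T^2*((s-r)^2+(q-s)^2+(r-q)^2)"
    using G_nonneg[OF nn(2,3,4) T_def] .
  have m1: "((p+q)^2 + (t+q)^2)*(s-r)^2 \<le> (1 - (T^2 - 2*q^2))*(s-r)^2" using k1 by (rule mult_right_mono) simp
  have m2: "((p+r)^2 + (t+r)^2)*(q-s)^2 \<le> (1 - (T^2 - 2*r^2))*(q-s)^2" using k2 by (rule mult_right_mono) simp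
  have m3: "((p+s)^2 + (t+s)^2)*(r-q)^2 \<le> (1 - (T^2 - 2*s^2))*(r-q)^2" using k3 by (rule mult_right_mono) simp
  have eS: "inertia (serial_child W) + inertia (parallel_child W) = ((p+q)^2 + (t+q)^2)*(s-r)^2 + ((p+r)^2 + (t+r)^2)*(q-s)^2 + ((p+s)^2 + (t+s)^2)*(r-q)^2"
    unfolding ser par by algebra
  have eA: "(1 - (T^2 - 2*q^2))*(s-r)^2 + (1 - (T^2 - 2*r^2))*(q-s)^2 + (1 - (T^2 - 2*s^2))*(r-q)^2
     = inertia W - T^2*((s-r)^2+(q-s)^2+(r-q)^2) + 2*(q^2*(s-r)^2 + r^2*(q-s)^2 + s^2*(r-q)^2)"
    unfolding orig by algebra
  show ?thesis using lin_final[OF eS m1 m2 m3 eA G] .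
qed

end
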